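(* The DRIMA factorization does not guarantee the RIGM principle for the CVaR metric. Precisely: there exist a number of agents $N$, finite action sets, a function $Q_{mix}:\mathbb{R}^N\to\mathbb{R}$ nondecreasing in each argument, per-agent return distributions $[Z_i(\tau_i,u_i)]_{i=1}^N$ with quantile functions $\theta_i(\tau_i,u_i,\omega)$, and a risk level $\alpha\in(0,1]$ such that, letting $Z_{tran}(\boldsymbol\tau,\boldsymbol u)$ be the return distribution with quantile function $\theta_{tran}(\boldsymbol\tau,\boldsymbol u,\omega)=Q_{mix}(\theta_1(\tau_1,u_1,\omega),\dots,\theta_N(\tau_N,u_N,\omega))$, $\omega\in(0,1]$, the utilities $[Z_i]_{i=1}^N$ do not satisfy RIGM for $Z_{tran}$ with risk metric $\mathrm{CVaR}_\alpha$.
   Context: There are $N$ agents; agent $i$ has observation history $\tau_i$ and finite action set $U_i$; $\boldsymbol\tau=(\tau_1,\dots,\tau_N)$, $\boldsymbol u=(u_1,\dots,u_N)$. For a real random variable $Z$ with CDF $F_Z$, its quantile function is $\theta_Z(\omega)=\inf\{z\in\mathbb{R}:\omega\le F_Z(z)\}$, $\omega\in(0,1]$. $\mathrm{CVaR}_\alpha(Z)=\frac1\alpha\int_0^\alpha\theta_Z(\omega)\,d\omega$ (the distortion risk measure with distortion $g(\omega)=\min(\omega/\alpha,1)$; $\mathrm{CVaR}_1=\mathbb{E}$). RIGM: given a risk metric $\psi$, per-agent return distributions $[Z_i(\tau_i,u_i)]$ satisfy RIGM for a joint return distribution $Z(\boldsymbol\tau,\boldsymbol u)$ with $\psi$ under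 $\boldsymbol\tau$ if $\arg\max_{\boldsymbol u}\psi[Z(\boldsymbol\tau,\boldsymbol u)]=(\arg\max_{u_1}\psi[Z_1(\tau_1,u_1)],\dots,\arg\max_{u_N}\psi[Z_N(\tau_N,u_N)])$. Argmax sets are assumed to be singletons (ties broken by smallest index). *)

theory Defs
  imports "HOL-Probability.Probability"
begin

definition cdf_of :: "real measure \<Rightarrow> real \<Rightarrow> real" where
  "cdf_of M z = measure M {..z}"

definition quantile :: "real measure \<Rightarrow> real \<Rightarrow> real" where
  "quantile M \<omega> = Inf {z. \<omega> \<le> cdf_of M z}"

definition CVaR :: "real \<Rightarrow> real measure \<Rightarrow> real" where
  "CVaR \<alpha> M = (1 / \<alpha>) * interval_lebesgue_integral lborel (ereal 0) (ereal \<alpha>) (quantile M)"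

definition real_distribution :: "real measure \<Rightarrow> bool" where
  "real_distribution M \<longleftrightarrow> prob_space M \<and> sets M = sets borel"

(* agents 0..<N, agent i has action set {..<n i}; joint actions are
   functions u with u i < n i for i < N (extensionally 0 beyond N) *)
definition joint_actions :: "nat \<Rightarrow> (nat \<Rightarrow> nat) \<Rightarrow> (nat \<Rightarrow> nat) set" where
  "joint_actions N n = {u. (\<forall>i<N. u i < n i) \<and> (\<forall>i\<ge>N. u i = 0)}"

definition argmax_set :: "('a \<Rightarrow> real) \<Rightarrow> 'a set \<Rightarrow> 'a set" where
  "argmax_set f A = {x \<in> A. \<forall>y\<in>A. f y \<le> f x}"

(* RIGM for risk metric psi (at the fixed joint observation history) *)
definition RIGM :: "(real measure \<Rightarrow> real) \<Rightarrow> nat \<Rightarrow> (nat \<Rightarrow> nat)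
    \<Rightarrow> (nat \<Rightarrow> nat \<Rightarrow> real measure) \<Rightarrow> ((nat \<Rightarrow> nat) \<Rightarrow> real measure) \<Rightarrow> bool" where
  "RIGM \<psi> N n Z Zj \<longleftrightarrow>
     argmax_set (\<lambda>u. \<psi> (Zj u)) (joint_actions N n) =
     {u \<in> joint_actions N n. \<forall>i<N. u i \<in> argmax_set (\<lambda>a. \<psi> (Z i a)) {..<n i}}"

definition mono_each_arg :: "nat \<Rightarrow> (real list \<Rightarrow> real) \<Rightarrow> bool" where
  "mono_each_arg N Q \<longleftrightarrow>
     (\<forall>xs i t. length xs = N \<and> i < N \<and> xs ! i \<le> t \<longrightarrow> Q xs \<le> Q (xs[i := t]))"

end

theory Submission
  imports Defs
begin

definition twopt :: "real \<Rightarrow> real \<Rightarrow> real measure" where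
  "twopt a b = distr (measure_pmf (pmf_of_set {a,b})) borel id"

lemma twopt_dist: "real_distribution (twopt a b)"
  unfolding real_distribution_def twopt_def
  by (auto intro!: prob_space.prob_space_distr prob_space_measure_pmf)

lemma twopt_cdf: assumes "a < b"
  shows "cdf_of (twopt a b) z = (if z < a then 0 else if z < b then 1/2 else 1)"
proof -
  have "cdf_of (twopt a b) z = measure (measure_pmf (pmf_of_set {a,b})) {..z}"
    unfolding cdf_of_def twopt_def by (subst measure_distr) auto
  also have "\<dots> = card ({a,b} \<inter> {..z}) / card {a,b}"
    by (rule measure_pmf_of_set) auto
  also have "\<dots> = (if z < a then 0 else if z < b then 1/2 else 1)"
  proof -
    have "{a,b} \<inter> {..z} = (if z < a then {} else if z < b then {a} else {a,b})"
      using assms by auto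
    then show ?thesis using assms by auto
  qed
  finally show ?thesis .
qed

lemma twopt_quantile: assumes "a < b" "0 < w" "w \<le> 1"
  shows "quantile (twopt a b) w = (if w \<le> 1/2 then a else b)"
proof -
  have "{z. w \<le> cdf_of (twopt a b) z} = (if w \<le> 1/2 then {a..} else {b..})"
    using assms by (auto simp: twopt_cdf)
  then show ?thesis unfolding quantile_def by simp
qed

lemma ret_dist: "real_distribution (return borel c)"
  unfolding real_distribution_def by (auto intro!: prob_space_return)

lemma ret_quantile: assumes "0 < w" "w \<le> 1"
  shows "quantile (return borel c) w = c"
proof -
  have "cdf_of (return borel c) z = (if c \<le> z then 1 else 0)" for z
    unfolding cdf_of_def by (simp add: measure_return indicator_def)
  then have "{z. w \<le> cdf_of (return borel c) z} = {c..}"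
    using assms by auto
  then show ?thesis unfolding quantile_def by simp
qed

lemma ret_CVaR: "CVaR 1 (return borel c) = c"
proof -
  have "interval_lebesgue_integral lborel (ereal 0) (ereal 1) (quantile (return borel c))
      = interval_lebesgue_integral lborel (ereal 0) (ereal 1) (\<lambda>_. c)"
    by (rule interval_integral_cong) (auto simp: einterval_def ret_quantile)
  then show ?thesis unfolding CVaR_def by simp
qed

lemma twopt_CVaR: assumes "a < b" shows "CVaR 1 (twopt a b) = (a + b) / 2"
proof -
  define g where "g = (\<lambda>x::real. if x \<le> 1/2 then a else b)"
  have "interval_lebesgue_integral lborel (ereal 0) (ereal 1) (quantile (twopt a b))
      = interval_lebesgue_integral lborel (ereal 0) (ereal 1) g"
    by (rule interval_integral_cong) (auto simp: einterval_def twopt_quantile[OF assms] g_def)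
  also have "\<dots> = (LBINT x=ereal 0..ereal (1/2). g x) + (LBINT x=ereal (1/2)..ereal 1. g x)"
  proof (rule interval_integral_sum[symmetric])
    have "interval_lebesgue_integrable lborel (ereal 0) (ereal 1) g"
      unfolding interval_lebesgue_integrable_def
      apply simp
      apply (rule set_integrable_bound[where f="\<lambda>_. max \<bar>a\<bar> \<bar>b\<bar>"])
        apply (metis interval_lebesgue_integrable_def interval_integral_const(1) einterval_eq zero_le_one ereal_less_eq(3) greaterThanLessThan_eq)
      apply (simp add: g_def)
      apply (unfold set_borel_measurable_def g_def) apply measurable
      done
    then show "interval_lebesgue_integrable lborel (min (ereal 0) (min (ereal (1/2)) (ereal 1))) (max (ereal 0) (max (ereal (1/2)) (ereal 1))) g"
      by (simp add: min_def max_def)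
  qed
  also have "(LBINT x=ereal 0..ereal (1/2). g x) = (LBINT x=ereal 0..ereal (1/2). a)"
    by (rule interval_integral_cong) (auto simp: einterval_def g_def)
  also have "(LBINT x=ereal (1/2)..ereal 1. g x) = (LBINT x=ereal (1/2)..ereal 1. b)"
    by (rule interval_integral_cong) (auto simp: einterval_def g_def)
  finally show ?thesis unfolding CVaR_def by simp
qed

theorem theorem3:
  shows "\<exists>(N::nat) (n::nat \<Rightarrow> nat) (Qmix::real list \<Rightarrow> real)
            (Z::nat \<Rightarrow> nat \<Rightarrow> real measure) (Ztran::(nat \<Rightarrow> nat) \<Rightarrow> real measure) (\<alpha>::real).
     N \<ge> 1 \<and> (\<forall>i<N. n i \<ge> 1) \<and>
     mono_each_arg N Qmix \<and>
     (\<forall>i<N. \<forall>a<n i. real_distribution (Z i a)) \<and>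
     0 < \<alpha> \<and> \<alpha> \<le> 1 \<and>
     (\<forall>u \<in> joint_actions N n. real_distribution (Ztran u) \<and>
        (\<forall>\<omega>\<in>{0<..1}. quantile (Ztran u) \<omega> =
            Qmix (map (\<lambda>i. quantile (Z i (u i)) \<omega>) [0..<N]))) \<and>
     (\<forall>i<N. card (argmax_set (\<lambda>a. CVaR \<alpha> (Z i a)) {..<n i}) = 1) \<and>
     card (argmax_set (\<lambda>u. CVaR \<alpha> (Ztran u)) (joint_actions N n)) = 1 \<and>
     \<not> RIGM (CVaR \<alpha>) N n Z Ztran"
proof -
  define u0 :: "nat \<Rightarrow> nat" where "u0 = (\<lambda>_. 0)"
  define u1 :: "nat \<Rightarrow> nat" where "u1 = (\<lambda>i. if i = 0 then 1 else 0)"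
  have u01: "u0 \<noteq> u1" unfolding u0_def u1_def by (metis zero_neq_one)
  have JA: "joint_actions 1 (\<lambda>_. 2) = {u0, u1}"
  proof safe
    fix u assume "u \<in> joint_actions 1 (\<lambda>_. 2)" "u \<noteq> u0"
    then have h: "u 0 < 2" "\<forall>i\<ge>1. u i = 0" unfolding joint_actions_def by auto
    show "u = u1"
    proof
      fix i show "u i = u1 i"
      proof (cases "i = 0")
        case True
        have "u 0 \<noteq> 0"
        proof
          assume "u 0 = 0"
          then have "u = u0" unfolding u0_def using h by (metis less_one linorder_not_le ext)
          then show False using \<open>u \<noteq> u0\<close> by simp
        qed
        then show ?thesis using True h unfolding u1_def by simp
      next
        case False then show ?thesis using h unfolding u1_def by simp
      qed
    qed
  qed (auto simp: joint_actions_def u0_def u1_def)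
  define Z :: "nat \<Rightarrow> nat \<Rightarrow> real measure" where
    "Z = (\<lambda>i a. if a = 0 then return borel 0 else twopt (-1) 3)"
  define Zt :: "(nat \<Rightarrow> nat) \<Rightarrow> real measure" where
    "Zt = (\<lambda>u. if u 0 = 0 then return borel 0 else twopt (-1) 0)"
  define Q :: "real list \<Rightarrow> real" where "Q = (\<lambda>xs. min (hd xs) 0)"
  have mono: "mono_each_arg 1 Q"
    unfolding mono_each_arg_def Q_def
    by (auto simp: length_Suc_conv)
  have dist: "\<forall>i<1. \<forall>a<2. real_distribution (Z i a)"
    unfolding Z_def by (auto simp: ret_dist twopt_dist)
  have tran: "\<forall>u \<in> joint_actions 1 (\<lambda>_. 2). real_distribution (Zt u) \<and>
        (\<forall>\<omega>\<in>{0<..1}. quantile (Zt u) \<omega> = Q (map (\<lambda>i. quantile (Z i (u i)) \<omega>) [0..<1]))"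
    unfolding JA Zt_def Z_def Q_def u0_def u1_def
    by (auto simp: ret_dist twopt_dist ret_quantile twopt_quantile)
  have cz: "CVaR 1 (Z i a) = (if a = 0 then 0 else 1)" for i a
    unfolding Z_def by (simp add: ret_CVaR twopt_CVaR)
  have ct: "CVaR 1 (Zt u) = (if u 0 = 0 then 0 else -1/2)" for u
    unfolding Zt_def by (simp add: ret_CVaR twopt_CVaR)
  have am1: "argmax_set (\<lambda>a. CVaR 1 (Z i a)) {..<2} = {1}" for i
    unfolding argmax_set_def cz by auto
  have am2: "argmax_set (\<lambda>u. CVaR 1 (Zt u)) (joint_actions 1 (\<lambda>_. 2)) = {u0}"
    unfolding argmax_set_def ct JA by (auto simp: u0_def u1_def)
  have nr: "\<not> RIGM (CVaR 1) 1 (\<lambda>_. 2) Z Zt"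
  proof
    assume "RIGM (CVaR 1) 1 (\<lambda>_. 2) Z Zt"
    then have "{u0} = {u \<in> {u0, u1}. \<forall>i<1. u i \<in> {1::nat}}"
      using am2 unfolding RIGM_def am1 JA by simp
    then have "u0 0 \<in> {1::nat}" by blast
    then show False unfolding u0_def by simp
  qed
  show ?thesis
    apply (rule exI[of _ 1], rule exI[of _ "\<lambda>_. 2"], rule exI[of _ Q], rule exI[of _ Z],
           rule exI[of _ Zt], rule exI[of _ 1])
    using mono dist tran am1 am2 nr by simp
qed

end
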